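(* Let $c_0,c_1$ be real constants with $c_0\ge\max\{c_1,-3c_1\}$, let $M\ge2$, and let $\{v_j\}_{j=0}^{M}$ be any real sequence. Put $$A=\frac12\sqrt{\frac{c_0-c_1}{2}}+\frac12\sqrt{\frac{c_0+3c_1}{2}},\qquad B=\sqrt{\frac{c_0-c_1}{2}},\qquad E_j=A^2v_j^2+\left(Bv_j-Av_{j-1}\right)^2,\ j=1,\dots,M.$$ Then for every $j=1,\dots,M-1$, $$v_{j+1}\left(c_0v_{j+1}-(c_0-c_1)v_j-c_1v_{j-1}\right)\ge E_{j+1}-E_j.$$ *)

theory Defs
  imports Complex_Main
begin

end

theory Submission
  imports Defs
begin

theorem lemma4:
  fixes c0 c1 :: real and M :: nat and v :: "nat \<Rightarrow> real" and A B :: real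
    and E :: "nat \<Rightarrow> real"
  assumes "c0 \<ge> max c1 (- 3 * c1)"
    and "M \<ge> 2"
  defines "A \<equiv> sqrt ((c0 - c1) / 2) / 2 + sqrt ((c0 + 3 * c1) / 2) / 2"
    and "B \<equiv> sqrt ((c0 - c1) / 2)"
    and "E \<equiv> (\<lambda>j. A\<^sup>2 * (v j)\<^sup>2 + (B * v j - A * v (j - 1))\<^sup>2)"
  shows "\<forall>j\<in>{1..M-1}. v (j + 1) * (c0 * v (j + 1) - (c0 - c1) * v j - c1 * v (j - 1))
           \<ge> E (j + 1) - E j"
proof
  fix j assume "j \<in> {1..M-1}"
  then have j1: "j + 1 - 1 = j" by simp
  define p where "p = sqrt ((c0 - c1) / 2)"
  define q where "q = sqrt ((c0 + 3 * c1) / 2)"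
  have p2: "p^2 = (c0 - c1) / 2" unfolding p_def using assms(1) by simp
  have q2: "q^2 = (c0 + 3 * c1) / 2" unfolding q_def using assms(1) by simp
  have c0: "c0 = (3 * p^2 + q^2) / 2" using p2 q2 by simp
  have c1: "c1 = (q^2 - p^2) / 2" using p2 q2 by simp
  have AB: "A = (p + q) / 2" "B = p" unfolding A_def B_def p_def q_def by simp_all
  define x where "x = v (j+1)"
  define y where "y = v j"
  define z where "z = v (j - 1)"
  have "v (j + 1) * (c0 * v (j + 1) - (c0 - c1) * v j - c1 * v (j - 1)) - (E (j + 1) - E j)
        = ((p - q) / 2 * x - p * y + (p + q) / 2 * z)^2"
    unfolding E_def j1 x_def[symmetric] y_def[symmetric] z_def[symmetric] AB c0 c1
    by (simp add: power2_eq_square algebra_simps divide_simps)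
  moreover have "((p - q) / 2 * x - p * y + (p + q) / 2 * z)^2 \<ge> 0" by simp
  ultimately show "v (j + 1) * (c0 * v (j + 1) - (c0 - c1) * v j - c1 * v (j - 1)) \<ge> E (j + 1) - E j"
    by linarith
qed

end
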